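(* Let $F=\begin{pmatrix}-1&-1&-1\\-1&8&-1\\-1&-1&-1\end{pmatrix}$ (edge detect C filter). Then for all $m,n\in\mathbb{N}$, it is not the case that the equation $F*X=B$ with the reflexive boundary condition, for unknown $X\in\mathbb{R}^{m\times n}$, has a unique solution for every $B\in\mathbb{R}^{m\times n}$.
   Context: For $F=[f_{ij}]\in\mathbb{R}^{3\times3}$ and $X=[x_{ij}]\in\mathbb{R}^{m\times n}$, the convolution $F*X\in\mathbb{R}^{m\times n}$ is defined by $[F*X]_{ij}=\sum_{l_1=1}^3\sum_{l_2=1}^3 f_{l_1l_2}\,x_{i-l_1+2,\,j-l_2+2}$ for $1\le i\le m$, $1\le j\le n$, where the reflexive boundary condition sets $x_{0j}=x_{1j}$, $x_{m+1,j}=x_{mj}$, $x_{i0}=x_{i1}$, $x_{i,n+1}=x_{in}$ (for all indices $i\in\{0,\dots,m+1\}$, $j\in\{0,\dots,n+1\}$, so corners are also determined, e.g. $x_{00}=x_{11}$). *)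

theory Defs
  imports Complex_Main
begin

text \<open>An m x n real matrix is represented as a function nat => nat => real whose
  entries outside the index range {1..m} x {1..n} are zero.\<close>
definition real_mats :: "nat \<Rightarrow> nat \<Rightarrow> (nat \<Rightarrow> nat \<Rightarrow> real) set" where
  "real_mats m n = {X. \<forall>i j. (i \<notin> {1..m} \<or> j \<notin> {1..n}) \<longrightarrow> X i j = 0}"

definition refl_idx :: "nat \<Rightarrow> nat \<Rightarrow> nat" where
  "refl_idx m k = (if k = 0 then 1 else if k = m + 1 then m else k)"

definition conv_refl :: "(nat \<Rightarrow> nat \<Rightarrow> real) \<Rightarrow> nat \<Rightarrow> nat \<Rightarrow> (nat \<Rightarrow> nat \<Rightarrow> real)
    \<Rightarrow> nat \<Rightarrow> nat \<Rightarrow> real" where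
  "conv_refl F m n X i j =
     (if i \<in> {1..m} \<and> j \<in> {1..n} then
        (\<Sum>l1\<in>{1..3}. \<Sum>l2\<in>{1..3}.
            F l1 l2 * X (refl_idx m (i + 2 - l1)) (refl_idx n (j + 2 - l2)))
      else 0)"

definition edgeC :: "nat \<Rightarrow> nat \<Rightarrow> real" where
  "edgeC l1 l2 = (if l1 = 2 \<and> l2 = 2 then 8 else -1)"

end

theory Submission
  imports Defs
begin

lemma refl_in:
  assumes "1 \<le> i" "i \<le> m" "l \<in> {1..3::nat}"
  shows "refl_idx m (i + 2 - l) \<in> {1..m}"
  using assms unfolding refl_idx_def by auto

theorem corollary15:
  fixes m n :: nat
  assumes "m \<ge> 1" and "n \<ge> 1"
  shows "\<not> (\<forall>B \<in> real_mats m n. \<exists>!X. X \<in> real_mats m n \<and> conv_refl edgeC m n X = B)"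
proof
  assume H: "\<forall>B \<in> real_mats m n. \<exists>!X. X \<in> real_mats m n \<and> conv_refl edgeC m n X = B"
  define Z :: "nat \<Rightarrow> nat \<Rightarrow> real" where "Z = (\<lambda>i j. 0)"
  define W :: "nat \<Rightarrow> nat \<Rightarrow> real" where "W = (\<lambda>i j. if i \<in> {1..m} \<and> j \<in> {1..n} then 1 else 0)"
  have Zm: "Z \<in> real_mats m n" by (simp add: Z_def real_mats_def)
  have Wm: "W \<in> real_mats m n" by (auto simp add: W_def real_mats_def)
  have cZ: "conv_refl edgeC m n Z = Z" by (rule ext)+ (simp add: conv_refl_def Z_def)
  have cW: "conv_refl edgeC m n W = Z"
  proof (rule ext, rule ext)
    fix i j
    show "conv_refl edgeC m n W i j = Z i j"
    proof (cases "i \<in> {1..m} \<and> j \<in> {1..n}")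
      case True
      have "(\<Sum>l1\<in>{1..3}. \<Sum>l2\<in>{1..3}.
            edgeC l1 l2 * W (refl_idx m (i + 2 - l1)) (refl_idx n (j + 2 - l2)))
          = (\<Sum>l1\<in>{1..3::nat}. \<Sum>l2\<in>{1..3::nat}. edgeC l1 l2)"
      proof (intro sum.cong refl)
        fix l1 l2 assume a: "l1 \<in> {1..3::nat}" "l2 \<in> {1..3::nat}"
        have "refl_idx m (i + 2 - l1) \<in> {1..m}" using refl_in[of i m l1] True a by auto
        moreover have "refl_idx n (j + 2 - l2) \<in> {1..n}" using refl_in[of j n l2] True a by auto
        ultimately show "edgeC l1 l2 * W (refl_idx m (i + 2 - l1)) (refl_idx n (j + 2 - l2)) = edgeC l1 l2"
          by (simp add: W_def)
      qed
      also have "\<dots> = 0" by (simp add: edgeC_def numeral_3_eq_3 atLeastAtMostSuc_conv)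
      finally show ?thesis using True by (simp add: conv_refl_def Z_def)
    qed (auto simp add: conv_refl_def Z_def)
  qed
  from H Zm have "\<exists>!X. X \<in> real_mats m n \<and> conv_refl edgeC m n X = Z" by blast
  with Zm Wm cZ cW have "W = Z" by blast
  hence "W 1 1 = Z 1 1" by simp
  thus False using assms by (simp add: W_def Z_def)
qed

end
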